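(* Let $L_1,L_2\ge1$ and consider two groups of moduli $m_{i,k}=m^{(i)}\Gamma_{i,k}$ ($i=1,2$, $1\le k\le L_i$), where $m^{(i)}\ge1$ are integers and, for each $i$, the integers $\Gamma_{i,1},\dots,\Gamma_{i,L_i}\ge1$ are pairwise co-prime. Let $\eta_i=\mathrm{lcm}(m_{i,1},\dots,m_{i,L_i})$, assume $\eta_1<\eta_2$, let $m=\gcd(\eta_1,\eta_2)$, $\Gamma_i=\eta_i/m$, and assume $\Gamma_1>1$. Let $1\le j\le K+1$ (with $\sigma_j,K,\ddot n_{2,j},\ddot n_{1,j}$ computed from $\Gamma_1,\Gamma_2$ as in the context) and put $X=\min\big(\eta_2(1+\ddot n_{2,j}),\,\eta_1(1+\ddot n_{1,j})\big)$. Let $\tau_1,\tau_2\ge0$ be reals with $$\tau_1<\frac{m^{(1)}}{4},\qquad \tau_2<\frac{m^{(2)}}{4},\qquad \tau_1+\tau_2<\frac{m\sigma_j}{2}.$$ Then there exists a map $\Phi$ from tuples $(\tilde r_{i,k})_{i,k}$ of integers to tuples of integers such that for every integer $N$ with $0\le N<X$ and every tuple of integers $\tilde r_{i,k}$ with $0\le\tilde r_{i,k}<m_{i,k}$ and $|\tilde r_{i,k}-|N|_{m_{i,k}}|\le\tau_i$ for all $i,k$, one has $\Phi((\tilde r_{i,k})_{i,k})=(\lfloor N/m_{i,k}\rfloor)_{i,k}$; i.e., all folding integers of $N$ modulo the $m_{i,k}$ are accurately determined by the erroneous remainders.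
   Context: $|a|_b$ is the remainder of the integer $a$ modulo the positive integer $b$. Euclidean sequence for co-prime $1<\Gamma_1<\Gamma_2$: $\sigma_{-1}=\Gamma_2$, $\sigma_0=\Gamma_1$, $\sigma_i=|\sigma_{i-2}|_{\sigma_{i-1}}$ for $i\ge1$; $K\ge0$ is the index with $\sigma_K>1$, $\sigma_{K+1}=1$. For $1\le n<\Gamma_1$, $S_{2,n}=\{|t\Gamma_2|_{\Gamma_1}:0\le t\le n\}$ and $d_{2,n}$ is the minimum distance between distinct elements of $S_{2,n}$; for $1\le n<\Gamma_2$, $S_{1,n}=\{|t\Gamma_1|_{\Gamma_2}:0\le t\le n\}$ and $d_{1,n}$ likewise. $\ddot n_{2,j}=\max\{n:1\le n<\Gamma_1,\ d_{2,n}\ge\sigma_j\}$, $\ddot n_{1,j}=\max\{n:1\le n<\Gamma_2,\ d_{1,n}\ge\sigma_j\}$. The groups may overlap (a modulus may appear in both). *)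

theory Defs
  imports Complex_Main
begin

text \<open>Euclidean sequence for G1 < G2: the shifted sequence esq G1 G2 n is sigma_(n-1),
  i.e. esq 0 = sigma_(-1) = G2, esq 1 = sigma_0 = G1,
  esq (n+2) = esq n mod esq (n+1).\<close>
fun esq :: "nat \<Rightarrow> nat \<Rightarrow> nat \<Rightarrow> nat" where
  "esq G1 G2 0 = G2"
| "esq G1 G2 (Suc 0) = G1"
| "esq G1 G2 (Suc (Suc n)) = esq G1 G2 n mod esq G1 G2 (Suc n)"

definition sigma :: "nat \<Rightarrow> nat \<Rightarrow> int \<Rightarrow> nat" where
  "sigma G1 G2 i = esq G1 G2 (nat (i + 1))"

definition Kidx :: "nat \<Rightarrow> nat \<Rightarrow> nat" where
  "Kidx G1 G2 = (THE K. sigma G1 G2 (int K) > 1 \<and> sigma G1 G2 (int K + 1) = 1)"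

definition mindist :: "nat set \<Rightarrow> nat" where
  "mindist S = Min {(if a \<ge> b then a - b else b - a) | a b. a \<in> S \<and> b \<in> S \<and> a \<noteq> b}"

definition S2 :: "nat \<Rightarrow> nat \<Rightarrow> nat \<Rightarrow> nat set" where
  "S2 G1 G2 n = {(t * G2) mod G1 | t. t \<le> n}"

definition S1 :: "nat \<Rightarrow> nat \<Rightarrow> nat \<Rightarrow> nat set" where
  "S1 G1 G2 n = {(t * G1) mod G2 | t. t \<le> n}"

definition nddot2 :: "nat \<Rightarrow> nat \<Rightarrow> int \<Rightarrow> nat" where
  "nddot2 G1 G2 j = Max {n. 1 \<le> n \<and> n < G1 \<and> mindist (S2 G1 G2 n) \<ge> sigma G1 G2 j}"

definition nddot1 :: "nat \<Rightarrow> nat \<Rightarrow> int \<Rightarrow> nat" where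
  "nddot1 G1 G2 j = Max {n. 1 \<le> n \<and> n < G2 \<and> mindist (S1 G1 G2 n) \<ge> sigma G1 G2 j}"

definition modulus :: "(nat \<Rightarrow> nat) \<Rightarrow> (nat \<Rightarrow> nat \<Rightarrow> nat) \<Rightarrow> nat \<Rightarrow> nat \<Rightarrow> nat" where
  "modulus mu Gam i k = mu i * Gam i k"

definition eta :: "(nat \<Rightarrow> nat) \<Rightarrow> (nat \<Rightarrow> nat) \<Rightarrow> (nat \<Rightarrow> nat \<Rightarrow> nat) \<Rightarrow> nat \<Rightarrow> nat" where
  "eta L mu Gam i = Lcm ((\<lambda>k. modulus mu Gam i k) ` {1..L i})"

end

theory Submission
  imports Defs
begin


lemma esq_le2:
  assumes "esq G1 G2 2 > 0"
  shows "esq G1 G2 (n+2) \<le> esq G1 G2 2 \<and> esq G1 G2 (n+3) \<le> esq G1 G2 2"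
proof (induction n)
  case 0
  have "esq G1 G2 3 = esq G1 G2 1 mod esq G1 G2 2"
    by (simp add: numeral_3_eq_3 numeral_2_eq_2)
  also have "\<dots> < esq G1 G2 2" using assms by simp
  finally have "esq G1 G2 3 < esq G1 G2 2" .
  thus ?case by (simp del: esq.simps add: numeral_3_eq_3 numeral_2_eq_2)
next
  case (Suc n)
  have "esq G1 G2 (Suc (Suc (n+2))) = esq G1 G2 (n+2) mod esq G1 G2 (Suc (n+2))"
    by (rule esq.simps(3))
  also have "\<dots> \<le> esq G1 G2 (n+2)" by simp
  finally have "esq G1 G2 (Suc (Suc (n+2))) \<le> esq G1 G2 2" using Suc by linarith
  moreover have "Suc (Suc (n+2)) = Suc n + 3" "Suc n + 2 = n + 3" by simp_all
  ultimately show ?case using Suc by (simp del: esq.simps add: eval_nat_numeral)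
qed

lemma sigma_le:
  assumes "esq G1 G2 2 > 0" "1 \<le> j"
  shows "sigma G1 G2 (int j) \<le> G2 mod G1"
proof -
  have "nat (int j + 1) = (j - 1) + 2" using assms(2) by arith
  hence "sigma G1 G2 (int j) = esq G1 G2 ((j - 1) + 2)" unfolding sigma_def
    by (simp del: esq.simps)
  also have "\<dots> \<le> esq G1 G2 2" using esq_le2[OF assms(1)] by blast
  also have "esq G1 G2 2 = G2 mod G1" by (simp add: numeral_2_eq_2)
  finally show ?thesis .
qed

lemma mindist_le:
  assumes "finite S" "a \<in> S" "b \<in> S" "a \<noteq> b"
  shows "mindist S \<le> (if a \<ge> b then a - b else b - a)"
proof -
  let ?D = "{(if a \<ge> b then a - b else b - a) | a b. a \<in> S \<and> b \<in> S \<and> a \<noteq> b}"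
  have "?D \<subseteq> (\<lambda>(a,b). if a \<ge> b then a - b else b - a) ` (S \<times> S)"
  proof
    fix d assume "d \<in> ?D"
    then obtain a b where "a \<in> S" "b \<in> S" "d = (if a \<ge> b then a - b else b - a)" by blast
    thus "d \<in> (\<lambda>(a,b). if a \<ge> b then a - b else b - a) ` (S \<times> S)"
      by (intro image_eqI[of _ _ "(a,b)"]) auto
  qed
  hence "finite ?D" using assms(1) by (meson finite_SigmaI finite_imageI finite_subset)
  thus ?thesis unfolding mindist_def using assms by (intro Min_le) auto
qed

lemma mindist_two:
  assumes "x > 0" shows "mindist {0, x} = x"
proof -
  have "{(if a \<ge> b then a - b else b - a) | a b. a \<in> {0,x} \<and> b \<in> {0,x} \<and> a \<noteq> b} = {x}"
  proof (rule set_eqI, rule iffI)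
    fix d assume "d \<in> {(if a \<ge> b then a - b else b - a) | a b. a \<in> {0,x} \<and> b \<in> {0,x} \<and> a \<noteq> b}"
    thus "d \<in> {x}" by auto
  next
    fix d assume "d \<in> {x}"
    hence "d = (if x \<ge> 0 then x - 0 else 0 - x) \<and> x \<in> {0,x} \<and> (0::nat) \<in> {0,x} \<and> x \<noteq> 0" using assms by simp
    thus "d \<in> {(if a \<ge> b then a - b else b - a) | a b. a \<in> {0,x} \<and> b \<in> {0,x} \<and> a \<noteq> b}" by blast
  qed
  thus ?thesis unfolding mindist_def by simp
qed

lemma S2_one: "S2 G1 G2 1 = {0, G2 mod G1}"
proof -
  have "x \<in> {(t * G2) mod G1 | t. t \<le> 1} \<longleftrightarrow> x = 0 \<or> x = G2 mod G1" for x
  proof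
    assume "x \<in> {(t * G2) mod G1 | t. t \<le> 1}"
    then obtain t where "t \<le> 1" "x = (t*G2) mod G1" by auto
    moreover have "t = 0 \<or> t = 1" using \<open>t \<le> 1\<close> by arith
    ultimately show "x = 0 \<or> x = G2 mod G1" by (elim disjE) simp_all
  next
    assume "x = 0 \<or> x = G2 mod G1"
    thus "x \<in> {(t * G2) mod G1 | t. t \<le> 1}"
    proof
      assume "x = 0" thus ?thesis by (intro CollectI exI[of _ "0::nat"]) simp
    next
      assume "x = G2 mod G1" thus ?thesis by (intro CollectI exI[of _ "1::nat"]) simp
    qed
  qed
  thus ?thesis unfolding S2_def by (intro set_eqI) simp
qed
lemma S1_one: "S1 G1 G2 1 = {0, G1 mod G2}"
proof -
  have "x \<in> {(t * G1) mod G2 | t. t \<le> 1} \<longleftrightarrow> x = 0 \<or> x = G1 mod G2" for x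
  proof
    assume "x \<in> {(t * G1) mod G2 | t. t \<le> 1}"
    then obtain t where "t \<le> 1" "x = (t*G1) mod G2" by auto
    moreover have "t = 0 \<or> t = 1" using \<open>t \<le> 1\<close> by arith
    ultimately show "x = 0 \<or> x = G1 mod G2" by (elim disjE) simp_all
  next
    assume "x = 0 \<or> x = G1 mod G2"
    thus "x \<in> {(t * G1) mod G2 | t. t \<le> 1}"
    proof
      assume "x = 0" thus ?thesis by (intro CollectI exI[of _ "0::nat"]) simp
    next
      assume "x = G1 mod G2" thus ?thesis by (intro CollectI exI[of _ "1::nat"]) simp
    qed
  qed
  thus ?thesis unfolding S1_def by (intro set_eqI) simp
qed

lemma S2_img: "S2 G1 G2 n = (\<lambda>t. (t*G2) mod G1) ` {..n}"
  unfolding S2_def by auto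
lemma S1_img: "S1 G1 G2 n = (\<lambda>t. (t*G1) mod G2) ` {..n}"
  unfolding S1_def by auto

lemma nddot2_prop:
  assumes "1 < G1" "0 < G2 mod G1" "sigma G1 G2 j \<le> G2 mod G1"
  shows "1 \<le> nddot2 G1 G2 j \<and> nddot2 G1 G2 j < G1 \<and>
     (\<forall>c. 1 \<le> c \<and> c \<le> nddot2 G1 G2 j \<and> (c*G2) mod G1 \<noteq> 0 \<longrightarrow> sigma G1 G2 j \<le> (c*G2) mod G1)"
proof -
  let ?A = "{n. 1 \<le> n \<and> n < G1 \<and> mindist (S2 G1 G2 n) \<ge> sigma G1 G2 j}"
  have "mindist (S2 G1 G2 1) = G2 mod G1" unfolding S2_one using assms(2) by (rule mindist_two)
  hence "1 \<in> ?A" using assms by simp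
  moreover have "finite ?A" by (rule finite_subset[of _ "{..<G1}"]) auto
  ultimately have "nddot2 G1 G2 j \<in> ?A" unfolding nddot2_def by (intro Max_in) auto
  hence n: "1 \<le> nddot2 G1 G2 j" "nddot2 G1 G2 j < G1" "mindist (S2 G1 G2 (nddot2 G1 G2 j)) \<ge> sigma G1 G2 j"
    by auto
  have "sigma G1 G2 j \<le> (c*G2) mod G1" if "1 \<le> c" "c \<le> nddot2 G1 G2 j" "(c*G2) mod G1 \<noteq> 0" for c
  proof -
    let ?S = "S2 G1 G2 (nddot2 G1 G2 j)"
    have "finite ?S" by (simp add: S2_img)
    moreover have "(c*G2) mod G1 \<in> ?S" using that by (simp add: S2_img)
    moreover have "(0*G2) mod G1 \<in> ?S" by (simp only: S2_img) (intro imageI, simp)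
    ultimately have "mindist ?S \<le> (if (c*G2) mod G1 \<ge> 0 then (c*G2) mod G1 - 0 else 0 - (c*G2) mod G1)"
      using that(3) by (intro mindist_le) auto
    thus ?thesis using n(3) by simp
  qed
  thus ?thesis using n by blast
qed

lemma nddot1_prop:
  assumes "1 < G2" "G1 < G2" "0 < G1" "sigma G1 G2 j \<le> G1"
  shows "1 \<le> nddot1 G1 G2 j \<and> nddot1 G1 G2 j < G2 \<and>
     (\<forall>c. 1 \<le> c \<and> c \<le> nddot1 G1 G2 j \<and> (c*G1) mod G2 \<noteq> 0 \<longrightarrow> sigma G1 G2 j \<le> (c*G1) mod G2)"
proof -
  let ?A = "{n. 1 \<le> n \<and> n < G2 \<and> mindist (S1 G1 G2 n) \<ge> sigma G1 G2 j}"
  have "mindist (S1 G1 G2 1) = G1" unfolding S1_one using assms by (simp add: mindist_two)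
  hence "1 \<in> ?A" using assms by simp
  moreover have "finite ?A" by (rule finite_subset[of _ "{..<G2}"]) auto
  ultimately have "nddot1 G1 G2 j \<in> ?A" unfolding nddot1_def by (intro Max_in) auto
  hence n: "1 \<le> nddot1 G1 G2 j" "nddot1 G1 G2 j < G2" "mindist (S1 G1 G2 (nddot1 G1 G2 j)) \<ge> sigma G1 G2 j"
    by auto
  have "sigma G1 G2 j \<le> (c*G1) mod G2" if "1 \<le> c" "c \<le> nddot1 G1 G2 j" "(c*G1) mod G2 \<noteq> 0" for c
  proof -
    let ?S = "S1 G1 G2 (nddot1 G1 G2 j)"
    have "finite ?S" by (simp add: S1_img)
    moreover have "(c*G1) mod G2 \<in> ?S" using that by (simp add: S1_img)
    moreover have "(0*G1) mod G2 \<in> ?S" by (simp only: S1_img) (intro imageI, simp)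
    ultimately have "mindist ?S \<le> (if (c*G1) mod G2 \<ge> 0 then (c*G1) mod G2 - 0 else 0 - (c*G1) mod G2)"
      using that(3) by (intro mindist_le) auto
    thus ?thesis using n(3) by simp
  qed
  thus ?thesis using n by blast
qed



lemma core_pos:
  fixes G1 G2 s n1 n2 :: nat and c1 c2 d :: int
  assumes cop: "coprime G1 G2" and g: "1 < G1" "G1 < G2" "s \<le> G1"
    and H1: "\<forall>c::nat. 1 \<le> c \<and> c \<le> n1 \<and> (c*G1) mod G2 \<noteq> 0 \<longrightarrow> s \<le> (c*G1) mod G2"
    and H2: "\<forall>c::nat. 1 \<le> c \<and> c \<le> n2 \<and> (c*G2) mod G1 \<noteq> 0 \<longrightarrow> s \<le> (c*G2) mod G1"
    and n: "n1 < G2" "n2 < G1"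
    and eq: "int G1*c1 - int G2*c2 = d" and d: "\<bar>d\<bar> < int s"
    and c: "\<bar>c1\<bar> \<le> int n1" "\<bar>c2\<bar> \<le> int n2" "0 \<le> c1"
  shows "c1 = 0 \<and> c2 = 0"
proof (cases "c1 = 0")
  case True
  have "c2 = 0"
  proof (rule ccontr)
    assume "c2 \<noteq> 0"
    hence "int G2 * 1 \<le> int G2 * \<bar>c2\<bar>" by (intro mult_left_mono) auto
    also have "\<dots> = \<bar>d\<bar>"
    proof -
      have "d = -(int G2*c2)" using eq True by simp
      thus ?thesis by (simp only: abs_minus_cancel abs_mult abs_of_nat)
    qed
    finally show False using d g by linarith
  qed
  thus ?thesis using True by simp
next
  case False
  hence c1p: "c1 > 0" using c(3) by simp
  show ?thesis
  proof (cases "d = 0")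
    case True
    hence "int G1 dvd int G2 * c2" using eq by (metis dvd_triv_left eq_iff_diff_eq_0)
    moreover have "coprime (int G1) (int G2)" using cop by simp
    ultimately have "int G1 dvd c2" using coprime_dvd_mult_right_iff by blast
    have "c2 = 0"
    proof (rule ccontr)
      assume "c2 \<noteq> 0"
      hence "\<bar>int G1\<bar> \<le> \<bar>c2\<bar>" using \<open>int G1 dvd c2\<close> dvd_imp_le_int by blast
      thus False using c(2) n(2) by simp
    qed
    hence "c1 = 0" using eq True g by simp
    thus ?thesis using False by simp
  next
    case dnz: False
    show ?thesis
    proof (cases "d > 0")
      case True
      define cc where "cc = nat c1"
      have "int ((cc*G1) mod G2) = (c1 * int G1) mod int G2" using c1p
        unfolding cc_def by (simp add: of_nat_mod)
      also have "c1 * int G1 = d + int G2 * c2" using eq by (simp add: algebra_simps)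
      also have "(d + int G2 * c2) mod int G2 = d mod int G2" by simp
      also have "\<dots> = d" using True d g by (intro mod_pos_pos_trivial) auto
      finally have r: "int ((cc*G1) mod G2) = d" .
      have "1 \<le> cc" "cc \<le> n1" using c1p c(1) unfolding cc_def by auto
      hence "s \<le> (cc*G1) mod G2" using H1 r True by auto
      thus ?thesis using r d by linarith
    next
      case False
      hence dn: "d < 0" using dnz by simp
      have "int G1 * c1 > 0" using c1p g by simp
      hence "int G2 * c2 > 0" using eq dn by linarith
      hence c2p: "c2 > 0" using g by (simp add: zero_less_mult_iff)
      define cc where "cc = nat c2"
      have "int ((cc*G2) mod G1) = (c2 * int G2) mod int G1" using c2p
        unfolding cc_def by (simp add: of_nat_mod)
      also have "c2 * int G2 = (- d) + int G1 * c1" using eq by (simp add: algebra_simps)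
      also have "(- d + int G1 * c1) mod int G1 = (- d) mod int G1" by (rule mod_mult_self2)
      also have "\<dots> = - d" using dn d g by (intro mod_pos_pos_trivial) auto
      finally have r: "int ((cc*G2) mod G1) = - d" .
      have "1 \<le> cc" "cc \<le> n2" using c2p c(2) unfolding cc_def by auto
      hence "s \<le> (cc*G2) mod G1" using H2 r dn by auto
      thus ?thesis using r d by linarith
    qed
  qed
qed

lemma core:
  fixes G1 G2 s n1 n2 :: nat and c1 c2 d :: int
  assumes cop: "coprime G1 G2" and g: "1 < G1" "G1 < G2" "s \<le> G1"
    and H1: "\<forall>c::nat. 1 \<le> c \<and> c \<le> n1 \<and> (c*G1) mod G2 \<noteq> 0 \<longrightarrow> s \<le> (c*G1) mod G2"
    and H2: "\<forall>c::nat. 1 \<le> c \<and> c \<le> n2 \<and> (c*G2) mod G1 \<noteq> 0 \<longrightarrow> s \<le> (c*G2) mod G1"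
    and n: "n1 < G2" "n2 < G1"
    and eq: "int G1*c1 - int G2*c2 = d" and d: "\<bar>d\<bar> < int s"
    and c: "\<bar>c1\<bar> \<le> int n1" "\<bar>c2\<bar> \<le> int n2"
  shows "c1 = 0 \<and> c2 = 0"
proof (cases "0 \<le> c1")
  case True
  thus ?thesis using core_pos[OF assms] by blast
next
  case False
  have "int G1*(-c1) - int G2*(-c2) = -d" using eq by simp
  from core_pos[OF cop g H1 H2 n this] d c False show ?thesis by simp
qed


lemma group:
  fixes mu L n :: nat and G :: "nat \<Rightarrow> nat" and T :: real and N N' X :: int
  assumes L: "1 \<le> L" and mu: "1 \<le> mu" and G: "\<forall>k\<in>{1..L}. 1 \<le> G k" and T: "T < real mu / 4"
    and close: "\<forall>k\<in>{1..L}. \<bar>real_of_int (N mod int (mu*G k) - N' mod int (mu*G k))\<bar> \<le> 2*T"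
    and N: "0 \<le> N" "0 \<le> N'" "N < X" "N' < X"
    and X: "X \<le> int (Lcm ((\<lambda>k. mu*G k) ` {1..L})) * (1 + int n)"
  shows "\<exists>e c. \<bar>real_of_int e\<bar> \<le> 2*T \<and> \<bar>c\<bar> \<le> int n \<and>
     N - N' = e + int (Lcm ((\<lambda>k. mu*G k) ` {1..L})) * c \<and>
     (\<forall>k\<in>{1..L}. N - N' - e = int (mu*G k) * (N div int (mu*G k) - N' div int (mu*G k)))"
proof -
  define M where "M k = int (mu * G k)" for k
  define eta where "eta = Lcm ((\<lambda>k. mu*G k) ` {1..L})"
  define e where "e = N mod M 1 - N' mod M 1"
  have Mpos: "M k > 0" if "k \<in> {1..L}" for k
  proof -
    have "G k \<ge> 1" using G that by blast
    thus ?thesis using mu unfolding M_def by simp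
  qed
  have dm: "N - N' - (N mod M k - N' mod M k) = M k * (N div M k - N' div M k)" for k
    unfolding right_diff_distrib using mult_div_mod_eq[of "M k" N] mult_div_mod_eq[of "M k" N'] by linarith
  have k1: "1 \<in> {1..L}" using L by simp
  have xe: "N mod M k - N' mod M k = e" if k: "k \<in> {1..L}" for k
  proof -
    let ?x = "N mod M k - N' mod M k"
    have "int mu dvd M k" "int mu dvd M 1" unfolding M_def by simp_all
    hence "int mu dvd M 1 * (N div M 1 - N' div M 1) - M k * (N div M k - N' div M k)"
      by (simp add: dvd_diff)
    also have "M 1 * (N div M 1 - N' div M 1) - M k * (N div M k - N' div M k) = ?x - e"
      using dm[of k] dm[of 1] unfolding e_def by linarith
    finally have dv: "int mu dvd ?x - e" .
    have "\<bar>real_of_int ?x\<bar> \<le> 2*T" "\<bar>real_of_int e\<bar> \<le> 2*T"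
      using close k k1 unfolding M_def e_def by auto
    hence "\<bar>real_of_int (?x - e)\<bar> < real mu" using T by linarith
    hence lt: "\<bar>?x - e\<bar> < int mu" by linarith
    show ?thesis
    proof (rule ccontr)
      assume "?x \<noteq> e"
      hence "?x - e \<noteq> 0" by simp
      from dvd_imp_le_int[OF this dv] have "\<bar>int mu\<bar> \<le> \<bar>?x - e\<bar>" .
      thus False using lt by simp
    qed
  qed
  have dvk: "int (mu * G k) dvd N - N' - e" if "k \<in> {1..L}" for k
  proof -
    have "N - N' - e = M k * (N div M k - N' div M k)" using dm[of k] xe[OF that] by simp
    thus ?thesis unfolding M_def by simp
  qed
  have "eta dvd nat \<bar>N - N' - e\<bar>" unfolding eta_def
    by (rule Lcm_least) (use dvk in auto)
  hence "int eta dvd N - N' - e" by simp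
  then obtain c where c: "N - N' - e = int eta * c" by (auto elim: dvdE)
  have n0: "0 \<notin> (\<lambda>k. mu*G k) ` {1..L}"
  proof
    assume "0 \<in> (\<lambda>k. mu*G k) ` {1..L}"
    then obtain k where k: "k \<in> {1..L}" "0 = mu*G k" by (auto simp only: image_iff)
    have "G k \<ge> 1" using G k(1) by blast
    thus False using k(2) mu by simp
  qed
  have "finite ((\<lambda>k. mu*G k) ` {1..L})" by simp
  from Lcm_0_iff[OF this] n0 have "Lcm ((\<lambda>k. mu*G k) ` {1..L}) \<noteq> 0" by blast
  hence etapos: "eta > 0" unfolding eta_def by (simp only: neq0_conv)
  have eq1: "int eta * c = M 1 * (N div M 1 - N' div M 1)" using c dm[of 1] unfolding e_def by simp
  have "M 1 * (N div M 1) \<le> N" using Mpos[OF k1]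
    by (metis le_add_same_cancel1 mult_div_mod_eq pos_mod_sign)
  moreover have "M 1 * (N' div M 1) \<le> N'" using Mpos[OF k1]
    by (metis le_add_same_cancel1 mult_div_mod_eq pos_mod_sign)
  moreover have "0 \<le> M 1 * (N div M 1)" "0 \<le> M 1 * (N' div M 1)" using Mpos[OF k1] N
    by (simp_all add: pos_imp_zdiv_nonneg_iff)
  ultimately have "int eta * c < X" "- X < int eta * c" using eq1 N by (simp_all add: right_diff_distrib)
  hence "int eta * c < int eta * (1 + int n)" "int eta * (- (1 + int n)) < int eta * c"
  proof -
    have "int eta * (- (1 + int n)) = - (int eta * (1 + int n))" by (rule mult_minus_right)
    thus "int eta * c < int eta * (1 + int n)" "int eta * (- (1 + int n)) < int eta * c"
      using X \<open>int eta * c < X\<close> \<open>- X < int eta * c\<close> unfolding eta_def by linarith+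
  qed
  hence "c < 1 + int n" "- (1 + int n) < c" using etapos
    by (simp_all add: mult_less_cancel_left_pos)
  hence "\<bar>c\<bar> \<le> int n" by linarith
  moreover have "\<bar>real_of_int e\<bar> \<le> 2*T" using close k1 unfolding M_def e_def by auto
  moreover have "N - N' = e + int eta * c" using c by simp
  moreover have "\<forall>k\<in>{1..L}. N - N' - e = int (mu*G k) * (N div int (mu*G k) - N' div int (mu*G k))"
    using dm xe unfolding M_def by (metis)
  ultimately show ?thesis unfolding eta_def by blast
qed


lemma key:
  fixes L mu :: "nat \<Rightarrow> nat" and Gam :: "nat \<Rightarrow> nat \<Rightarrow> nat"
    and j :: nat and tau :: "nat \<Rightarrow> real" and N N' :: int and r :: "nat \<Rightarrow> nat \<Rightarrow> int"
  assumes defs: "\<eta>1 = eta L mu Gam 1" "\<eta>2 = eta L mu Gam 2" "g = gcd \<eta>1 \<eta>2"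
      "G1 = \<eta>1 div g" "G2 = \<eta>2 div g" "s = sigma G1 G2 (int j)"
      "n1 = nddot1 G1 G2 (int j)" "n2 = nddot2 G1 G2 (int j)"
    and L_pos: "\<forall>i\<in>{1,2}. L i \<ge> 1"
    and mu_pos: "\<forall>i\<in>{1,2}. mu i \<ge> 1"
    and Gam_pos: "\<forall>i\<in>{1,2}. \<forall>k\<in>{1..L i}. Gam i k \<ge> 1"
    and eta_less: "\<eta>1 < \<eta>2" and G1_gt: "G1 > 1" and j1: "1 \<le> j"
    and tau_nonneg: "tau 1 \<ge> 0" "tau 2 \<ge> 0"
    and tau1_bd: "tau 1 < real (mu 1) / 4"
    and tau2_bd: "tau 2 < real (mu 2) / 4"
    and tau_sum: "tau 1 + tau 2 < real g * real s / 2"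
    and NN: "0 \<le> N" "N < int (min (\<eta>2 * (1 + n2)) (\<eta>1 * (1 + n1)))"
       "0 \<le> N'" "N' < int (min (\<eta>2 * (1 + n2)) (\<eta>1 * (1 + n1)))"
    and rN: "\<forall>i\<in>{1,2}. \<forall>k\<in>{1..L i}.
          0 \<le> r i k \<and> r i k < int (modulus mu Gam i k) \<and>
          \<bar>real_of_int (r i k - N mod int (modulus mu Gam i k))\<bar> \<le> tau i"
    and rN': "\<forall>i\<in>{1,2}. \<forall>k\<in>{1..L i}.
          0 \<le> r i k \<and> r i k < int (modulus mu Gam i k) \<and>
          \<bar>real_of_int (r i k - N' mod int (modulus mu Gam i k))\<bar> \<le> tau i"
  shows "\<forall>i\<in>{1,2}. \<forall>k\<in>{1..L i}. N div int (modulus mu Gam i k) = N' div int (modulus mu Gam i k)"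
proof -
  have eta1pos: "\<eta>1 > 0" using G1_gt defs(4) by (cases "\<eta>1 = 0") auto
  have gpos: "g > 0" using eta1pos defs(3) by simp
  have e1: "\<eta>1 = g * G1" using defs(3,4) by simp
  have e2: "\<eta>2 = g * G2" using defs(3,5) by simp
  have cop: "coprime G1 G2" unfolding defs(4,5,3) using eta1pos by (intro div_gcd_coprime) simp
  have G12: "G1 < G2" using eta_less e1 e2 gpos by simp
  have m0: "G2 mod G1 > 0"
  proof (rule ccontr)
    assume "\<not> G2 mod G1 > 0"
    hence "G1 dvd G2" by auto
    hence "gcd G1 G2 = G1" by (simp add: gcd_nat.absorb1)
    thus False using cop G1_gt by simp
  qed
  have esq2: "esq G1 G2 2 = G2 mod G1" by (simp add: numeral_2_eq_2)
  have sle: "s \<le> G2 mod G1" unfolding defs(6) using sigma_le[of G1 G2 j] m0 esq2 j1 by simp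
  have sG1: "s \<le> G1" using sle G1_gt by (meson le_trans less_imp_le_nat mod_less_divisor order.strict_trans zero_less_one)
  from nddot2_prop[of G1 G2 "int j"] G1_gt m0 sle
  have P2: "1 \<le> n2" "n2 < G1"
     "\<forall>c. 1 \<le> c \<and> c \<le> n2 \<and> (c*G2) mod G1 \<noteq> 0 \<longrightarrow> s \<le> (c*G2) mod G1"
    unfolding defs(6,8) by auto
  from nddot1_prop[of G2 G1 "int j"] G1_gt G12 sG1
  have P1: "1 \<le> n1" "n1 < G2"
     "\<forall>c. 1 \<le> c \<and> c \<le> n1 \<and> (c*G1) mod G2 \<noteq> 0 \<longrightarrow> s \<le> (c*G1) mod G2"
    unfolding defs(6,7) by auto
  define X where "X = int (min (\<eta>2 * (1 + n2)) (\<eta>1 * (1 + n1)))"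
  have grp: "\<exists>e c. \<bar>real_of_int e\<bar> \<le> 2*tau i \<and> \<bar>c\<bar> \<le> int n \<and>
     N - N' = e + int \<eta> * c \<and>
     (\<forall>k\<in>{1..L i}. N - N' - e = int (modulus mu Gam i k) * (N div int (modulus mu Gam i k) - N' div int (modulus mu Gam i k)))"
    if i: "i \<in> {1,2}" and et: "\<eta> = eta L mu Gam i" and tb: "tau i < real (mu i) / 4"
      and Xb: "X \<le> int \<eta> * (1 + int n)" for i \<eta> n
  proof -
    have cl: "\<forall>k\<in>{1..L i}. \<bar>real_of_int (N mod int (mu i*Gam i k) - N' mod int (mu i*Gam i k))\<bar> \<le> 2*tau i"
    proof
      fix k assume k: "k \<in> {1..L i}"
      have "\<bar>real_of_int (r i k - N mod int (modulus mu Gam i k))\<bar> \<le> tau i"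
           "\<bar>real_of_int (r i k - N' mod int (modulus mu Gam i k))\<bar> \<le> tau i"
        using rN rN' i k by blast+
      thus "\<bar>real_of_int (N mod int (mu i*Gam i k) - N' mod int (mu i*Gam i k))\<bar> \<le> 2*tau i"
        unfolding modulus_def by (simp add: abs_le_iff)
    qed
    have Xb': "X \<le> int (Lcm ((\<lambda>k. mu i*Gam i k) ` {1..L i})) * (1 + int n)"
      using Xb et unfolding eta_def modulus_def by simp
    have "N < X" "N' < X" using NN unfolding X_def by auto
    from group[of "L i" "mu i" "Gam i" "tau i" N N' X n] L_pos mu_pos Gam_pos i tb cl NN(1,3) this Xb'
    show ?thesis using et unfolding eta_def modulus_def by auto
  qed
  have "X \<le> int (\<eta>1 * (1 + n1))" "X \<le> int (\<eta>2 * (1 + n2))" unfolding X_def of_nat_le_iff by simp_all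
  hence X1: "X \<le> int \<eta>1 * (1 + int n1)" and X2: "X \<le> int \<eta>2 * (1 + int n2)" by (simp_all add: distrib_left)
  obtain ea ca where A: "\<bar>real_of_int ea\<bar> \<le> 2*tau 1" "\<bar>ca\<bar> \<le> int n1" "N - N' = ea + int \<eta>1 * ca"
     "\<forall>k\<in>{1..L 1}. N - N' - ea = int (modulus mu Gam 1 k) * (N div int (modulus mu Gam 1 k) - N' div int (modulus mu Gam 1 k))"
    using grp[of 1 \<eta>1 n1] defs(1) tau1_bd X1 by auto
  obtain eb cb where B: "\<bar>real_of_int eb\<bar> \<le> 2*tau 2" "\<bar>cb\<bar> \<le> int n2" "N - N' = eb + int \<eta>2 * cb"
     "\<forall>k\<in>{1..L 2}. N - N' - eb = int (modulus mu Gam 2 k) * (N div int (modulus mu Gam 2 k) - N' div int (modulus mu Gam 2 k))"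
    using grp[of 2 \<eta>2 n2] defs(2) tau2_bd X2 by auto
  define d where "d = int G1 * ca - int G2 * cb"
  have gd: "int g * d = eb - ea" using A(3) B(3) e1 e2 unfolding d_def by (simp add: algebra_simps)
  have "real g * \<bar>real_of_int d\<bar> = \<bar>real_of_int (eb - ea)\<bar>"
    using gd by (metis abs_mult abs_of_nat of_int_mult of_int_of_nat_eq)
  also have "\<dots> < real g * real s" using A(1) B(1) tau_sum by simp
  finally have "\<bar>real_of_int d\<bar> < real s" using gpos by simp
  hence dlt: "\<bar>d\<bar> < int s" by linarith
  have "ca = 0 \<and> cb = 0"
    using core[OF cop G1_gt G12 sG1 P1(3) P2(3) P1(2) P2(2) d_def[symmetric] dlt A(2) B(2)] .
  hence z: "N - N' = ea" "N - N' = eb" using A(3) B(3) by simp_all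
  show ?thesis
  proof (intro ballI)
    fix i k assume i: "i \<in> {1,2}" and k: "k \<in> {1..L i}"
    have mp: "int (modulus mu Gam i k) > 0"
    proof -
      have "Gam i k \<ge> 1" "mu i \<ge> 1" using Gam_pos mu_pos i k by blast+
      thus ?thesis unfolding modulus_def by simp
    qed
    have "int (modulus mu Gam i k) * (N div int (modulus mu Gam i k) - N' div int (modulus mu Gam i k)) = 0"
      using i A(4) B(4) z k by auto
    thus "N div int (modulus mu Gam i k) = N' div int (modulus mu Gam i k)" using mp by simp
  qed
qed

theorem theorem3:
  fixes L mu :: "nat \<Rightarrow> nat" and Gam :: "nat \<Rightarrow> nat \<Rightarrow> nat"
    and j :: nat and tau :: "nat \<Rightarrow> real"
  assumes L_pos: "\<forall>i\<in>{1,2}. L i \<ge> 1"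
    and mu_pos: "\<forall>i\<in>{1,2}. mu i \<ge> 1"
    and Gam_pos: "\<forall>i\<in>{1,2}. \<forall>k\<in>{1..L i}. Gam i k \<ge> 1"
    and Gam_coprime: "\<forall>i\<in>{1,2}. \<forall>k\<in>{1..L i}. \<forall>k'\<in>{1..L i}.
                         k \<noteq> k' \<longrightarrow> coprime (Gam i k) (Gam i k')"
    and eta_less: "eta L mu Gam 1 < eta L mu Gam 2"
    and Gam1_gt: "eta L mu Gam 1 div gcd (eta L mu Gam 1) (eta L mu Gam 2) > 1"
    and j_range: "1 \<le> j"
      "j \<le> Kidx (eta L mu Gam 1 div gcd (eta L mu Gam 1) (eta L mu Gam 2))
                 (eta L mu Gam 2 div gcd (eta L mu Gam 1) (eta L mu Gam 2)) + 1"
    and tau_nonneg: "tau 1 \<ge> 0" "tau 2 \<ge> 0"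
    and tau1_bd: "tau 1 < real (mu 1) / 4"
    and tau2_bd: "tau 2 < real (mu 2) / 4"
    and tau_sum: "tau 1 + tau 2 <
        real (gcd (eta L mu Gam 1) (eta L mu Gam 2)) *
        real (sigma (eta L mu Gam 1 div gcd (eta L mu Gam 1) (eta L mu Gam 2))
                    (eta L mu Gam 2 div gcd (eta L mu Gam 1) (eta L mu Gam 2)) (int j)) / 2"
  shows "\<exists>\<Phi> :: (nat \<Rightarrow> nat \<Rightarrow> int) \<Rightarrow> (nat \<Rightarrow> nat \<Rightarrow> int).
    \<forall>N :: int. 0 \<le> N \<and>
      N < int (min
        (eta L mu Gam 2 * (1 + nddot2
            (eta L mu Gam 1 div gcd (eta L mu Gam 1) (eta L mu Gam 2))
            (eta L mu Gam 2 div gcd (eta L mu Gam 1) (eta L mu Gam 2)) (int j)))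
        (eta L mu Gam 1 * (1 + nddot1
            (eta L mu Gam 1 div gcd (eta L mu Gam 1) (eta L mu Gam 2))
            (eta L mu Gam 2 div gcd (eta L mu Gam 1) (eta L mu Gam 2)) (int j)))) \<longrightarrow>
    (\<forall>r :: nat \<Rightarrow> nat \<Rightarrow> int.
       (\<forall>i\<in>{1,2}. \<forall>k\<in>{1..L i}.
          0 \<le> r i k \<and> r i k < int (modulus mu Gam i k) \<and>
          \<bar>real_of_int (r i k - N mod int (modulus mu Gam i k))\<bar> \<le> tau i) \<longrightarrow>
       (\<forall>i\<in>{1,2}. \<forall>k\<in>{1..L i}. \<Phi> r i k = N div int (modulus mu Gam i k)))"
  proof -
  define P where "P N r \<longleftrightarrow> (0 \<le> N \<and>
      N < int (min
        (eta L mu Gam 2 * (1 + nddot2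
            (eta L mu Gam 1 div gcd (eta L mu Gam 1) (eta L mu Gam 2))
            (eta L mu Gam 2 div gcd (eta L mu Gam 1) (eta L mu Gam 2)) (int j)))
        (eta L mu Gam 1 * (1 + nddot1
            (eta L mu Gam 1 div gcd (eta L mu Gam 1) (eta L mu Gam 2))
            (eta L mu Gam 2 div gcd (eta L mu Gam 1) (eta L mu Gam 2)) (int j)))) \<and>
       (\<forall>i\<in>{1,2}. \<forall>k\<in>{1..L i}.
          0 \<le> r i k \<and> r i k < int (modulus mu Gam i k) \<and>
          \<bar>real_of_int (r i k - N mod int (modulus mu Gam i k))\<bar> \<le> tau i))" for N r
  have key': "\<forall>i\<in>{1,2}. \<forall>k\<in>{1..L i}. N div int (modulus mu Gam i k) = N' div int (modulus mu Gam i k)"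
    if "P N r" "P N' r" for N N' r
    using key[OF refl refl refl refl refl refl refl refl L_pos mu_pos Gam_pos eta_less Gam1_gt
        j_range(1) tau_nonneg tau1_bd tau2_bd tau_sum] that unfolding P_def by blast
  show ?thesis
  proof (rule exI[of _ "\<lambda>r i k. (SOME N. P N r) div int (modulus mu Gam i k)"], intro allI impI ballI)
    fix N r i k
    assume H: "0 \<le> N \<and>
      N < int (min
        (eta L mu Gam 2 * (1 + nddot2
            (eta L mu Gam 1 div gcd (eta L mu Gam 1) (eta L mu Gam 2))
            (eta L mu Gam 2 div gcd (eta L mu Gam 1) (eta L mu Gam 2)) (int j)))
        (eta L mu Gam 1 * (1 + nddot1
            (eta L mu Gam 1 div gcd (eta L mu Gam 1) (eta L mu Gam 2))
            (eta L mu Gam 2 div gcd (eta L mu Gam 1) (eta L mu Gam 2)) (int j))))"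
      and R: "\<forall>i\<in>{1,2}. \<forall>k\<in>{1..L i}.
          0 \<le> r i k \<and> r i k < int (modulus mu Gam i k) \<and>
          \<bar>real_of_int (r i k - N mod int (modulus mu Gam i k))\<bar> \<le> tau i"
      and i: "i \<in> {1,2}" and k: "k \<in> {1..L i}"
    have PN: "P N r" unfolding P_def using H R by blast
    hence "P (SOME N. P N r) r" by (rule someI)
    from key'[OF this PN] i k
    show "(SOME N. P N r) div int (modulus mu Gam i k) = N div int (modulus mu Gam i k)" by blast
  qed
qed

end
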